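(* Let $G$ be a finite group acting linearly, isometrically and effectively on $M=\mathbb{R}^n$. Let $X$ be a random variable in $\mathbb{R}^n$ whose law is absolutely continuous with respect to Lebesgue measure, with $\mathbb{E}(\|X\|^2)<+\infty$, and assume that $t_0=\mathbb{E}(X)$ is a regular point. If $$\mathbb{P}\big(X\notin \mathrm{Cone}(t_0)\big)>0,$$ then $[t_0]$ is not a Fréchet mean of $[X]$.
   Context: $\mathbb{R}^n$ carries the Euclidean inner product $\langle\cdot,\cdot\rangle$ and norm $\|\cdot\|$. A group $G$ acts on $M$ via $(g,m)\mapsto g\cdot m$ with $(gg')\cdot m=g\cdot(g'\cdot m)$ and $e_G\cdot m=m$; the action is linear and isometric if each $x\mapsto g\cdot x$ is linear with $\|g\cdot x\|=\|x\|$, and effective if $x\mapsto g\cdot x$ is the identity map only for $g=e_G$. The orbit of $m$ is $[m]=\{g\cdot m: g\in G\}$ and the quotient distance is $d_Q([a],[b])=\inf_{g\in G}\|g\cdot a-b\|$. A point $m$ is regular if $\{g\in G: g\cdot m=m\}=\{e_G\}$. For a regular $m$, $\mathrm{Cone}(m)=\{x\in\mathbb{R}^n: \|x-m\|\le\|x-g\cdot m\| \text{ for all } g\in G\}$. The variance of $[X]$ is $F(m)=\mathbb{E}\big(\min_{g\in G}\|g\cdot X-m\|^2\big)=\mathbb{E}(d_Q([m],[X])^2)$ for $m\in M$; an orbit $[m_\star]$ is a Fréchet mean of $[X]$ if $m_\star$ is a global minimiser of $F$. *)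

theory Defs
  imports "HOL-Probability.Probability" "HOL-Algebra.Group"
begin

definition lin_iso_eff_action :: "('g, 'b) monoid_scheme \<Rightarrow> ('g \<Rightarrow> 'a::euclidean_space \<Rightarrow> 'a) \<Rightarrow> bool" where
  "lin_iso_eff_action G act \<longleftrightarrow>
     (\<forall>g\<in>carrier G. \<forall>h\<in>carrier G. \<forall>x. act (g \<otimes>\<^bsub>G\<^esub> h) x = act g (act h x)) \<and>
     (\<forall>x. act \<one>\<^bsub>G\<^esub> x = x) \<and>
     (\<forall>g\<in>carrier G. linear (act g)) \<and>
     (\<forall>g\<in>carrier G. \<forall>x. norm (act g x) = norm x) \<and>
     (\<forall>g\<in>carrier G. (\<forall>x. act g x = x) \<longrightarrow> g = \<one>\<^bsub>G\<^esub>)"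

definition regular_point :: "('g, 'b) monoid_scheme \<Rightarrow> ('g \<Rightarrow> 'a \<Rightarrow> 'a) \<Rightarrow> 'a \<Rightarrow> bool" where
  "regular_point G act m \<longleftrightarrow> {g \<in> carrier G. act g m = m} = {\<one>\<^bsub>G\<^esub>}"

definition Cone :: "('g, 'b) monoid_scheme \<Rightarrow> ('g \<Rightarrow> 'a::real_normed_vector \<Rightarrow> 'a) \<Rightarrow> 'a \<Rightarrow> 'a set" where
  "Cone G act m = {x. \<forall>g\<in>carrier G. norm (x - m) \<le> norm (x - act g m)}"

definition orbit_variance :: "'w measure \<Rightarrow> ('g, 'b) monoid_scheme \<Rightarrow> ('g \<Rightarrow> 'a::euclidean_space \<Rightarrow> 'a)
    \<Rightarrow> ('w \<Rightarrow> 'a) \<Rightarrow> 'a \<Rightarrow> real" where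
  "orbit_variance M G act X m =
     (\<integral>w. Min ((\<lambda>g. (norm (act g (X w) - m))\<^sup>2) ` carrier G) \<partial>M)"

definition is_frechet_mean :: "'w measure \<Rightarrow> ('g, 'b) monoid_scheme \<Rightarrow> ('g \<Rightarrow> 'a::euclidean_space \<Rightarrow> 'a)
    \<Rightarrow> ('w \<Rightarrow> 'a) \<Rightarrow> 'a \<Rightarrow> bool" where
  "is_frechet_mean M G act X m \<longleftrightarrow> (\<forall>m'. orbit_variance M G act X m \<le> orbit_variance M G act X m')"

end

theory Submission
  imports Defs
begin

lemma inner_pres:
  fixes f :: "'a::euclidean_space \<Rightarrow> 'a"
  assumes "linear f" "\<And>x. norm (f x) = norm x"
  shows "inner (f x) (f y) = inner x y"
proof -
  have "f x + f y = f (x + y)" using assms(1) by (simp add: linear_add)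
  then show ?thesis by (simp add: dot_norm assms(2))
qed

lemma nds:
  fixes a b :: "'a::real_inner"
  shows "(norm (a - b))\<^sup>2 = (norm a)\<^sup>2 - 2 * inner a b + (norm b)\<^sup>2"
  by (simp add: power2_norm_eq_inner inner_diff_left inner_diff_right inner_commute)

lemma min_max:
  fixes f :: "'g \<Rightarrow> real"
  assumes "finite C" "C \<noteq> {}" "d \<ge> 0"
  shows "Min ((\<lambda>g. K - d * f g) ` C) = K - d * Max (f ` C)"
proof -
  have "Max (f ` C) \<in> f ` C" using assms by simp
  then obtain g0 where g0: "g0 \<in> C" "f g0 = Max (f ` C)" by auto
  show ?thesis
  proof (rule Min_eqI)
    show "finite ((\<lambda>g. K - d * f g) ` C)" using assms by simp
    fix y assume "y \<in> (\<lambda>g. K - d * f g) ` C"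
    then obtain g where "g \<in> C" "y = K - d * f g" by auto
    moreover have "f g \<le> Max (f ` C)" using assms \<open>g \<in> C\<close> by simp
    ultimately show "K - d * Max (f ` C) \<le> y" using assms(3) by (simp add: mult_left_mono)
  next
    show "K - d * Max (f ` C) \<in> (\<lambda>g. K - d * f g) ` C" using g0 by (metis image_eqI)
  qed
qed

lemma int_of_sq:
  fixes X :: "'w \<Rightarrow> 'a::euclidean_space"
  assumes "prob_space M" "X \<in> borel_measurable M" "integrable M (\<lambda>w. (norm (X w))\<^sup>2)"
  shows "integrable M X"
proof -
  interpret P: prob_space M by fact
  have b: "integrable M (\<lambda>x. 1 + (norm (X x))\<^sup>2)" using assms(3) by simp
  have ineq: "norm (X x) \<le> norm (1 + (norm (X x))\<^sup>2)" for x
  proof -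
    have "0 \<le> (norm (X x) - 1)\<^sup>2" by simp
    then have "norm (X x) \<le> 1 + (norm (X x))\<^sup>2"
      by (simp add: power2_diff) (smt (verit) zero_le_power2)
    then show ?thesis by simp
  qed
  show ?thesis
    by (rule Bochner_Integration.integrable_bound[OF b assms(2)]) (intro AE_I2 ineq)
qed

theorem mainTheorem1:
  fixes G :: "('g, 'b) monoid_scheme"
    and act :: "'g \<Rightarrow> 'a::euclidean_space \<Rightarrow> 'a"
    and M :: "'w measure"
    and X :: "'w \<Rightarrow> 'a"
  assumes "group G" and "finite (carrier G)"
    and "lin_iso_eff_action G act"
    and "prob_space M"
    and "X \<in> borel_measurable M"
    and "absolutely_continuous lborel (distr M lborel X)"
    and "integrable M (\<lambda>w. (norm (X w))\<^sup>2)"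
    and "t0 = (\<integral>w. X w \<partial>M)"
    and "regular_point G act t0"
    and "measure M {w \<in> space M. X w \<notin> Cone G act t0} > 0"
  shows "\<not> is_frechet_mean M G act X t0"
proof
  assume fm: "is_frechet_mean M G act X t0"
  interpret P: prob_space M by fact
  interpret grp: group G by fact
  let ?C = "carrier G"
  have fin: "finite ?C" and ne: "?C \<noteq> {}" using assms(2) grp.one_closed by auto
  have mul: "\<And>g h x. g \<in> ?C \<Longrightarrow> h \<in> ?C \<Longrightarrow> act (g \<otimes>\<^bsub>G\<^esub> h) x = act g (act h x)"
    and one: "\<And>x. act \<one>\<^bsub>G\<^esub> x = x"
    and lin: "\<And>g. g \<in> ?C \<Longrightarrow> linear (act g)"
    and iso: "\<And>g x. g \<in> ?C \<Longrightarrow> norm (act g x) = norm x"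
    using assms(3) unfolding lin_iso_eff_action_def by auto
  have innerp: "\<And>g x y. g \<in> ?C \<Longrightarrow> inner (act g x) (act g y) = inner x y"
    using inner_pres lin iso by blast
  have adj: "inner (act g x) y = inner x (act (inv\<^bsub>G\<^esub> g) y)" if "g \<in> ?C" for g x y
  proof -
    have "act g (act (inv\<^bsub>G\<^esub> g) y) = y"
      using that mul[of g "inv\<^bsub>G\<^esub> g" y] one by simp
    then have "inner (act g x) y = inner (act g x) (act g (act (inv\<^bsub>G\<^esub> g) y))" by simp
    also have "\<dots> = inner x (act (inv\<^bsub>G\<^esub> g) y)" using innerp that by blast
    finally show ?thesis .
  qed
  have contg: "continuous_on UNIV (act g)" if "g \<in> ?C" for g
    using lin[OF that] by (simp add: linear_continuous_on linear_conv_bounded_linear)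
  have measg: "(\<lambda>w. act g (X w)) \<in> borel_measurable M" if "g \<in> ?C" for g
    using measurable_compose[OF assms(5) borel_measurable_continuous_onI[OF contg[OF that]]]
    by (simp add: comp_def)
  define \<phi> where "\<phi> x = Max ((\<lambda>g. inner (act g x) t0) ` ?C)" for x
  have intX: "integrable M X" using int_of_sq assms(4,5,7) by blast
  have meas_phi: "(\<lambda>w. \<phi> (X w)) \<in> borel_measurable M"
    unfolding \<phi>_def
    by (rule borel_measurable_Max[OF fin]) (intro borel_measurable_inner measg borel_measurable_const)
  have phi_bound: "\<bar>\<phi> x\<bar> \<le> norm x * norm t0" for x
  proof -
    have "\<phi> x \<in> (\<lambda>g. inner (act g x) t0) ` ?C" unfolding \<phi>_def using fin ne by simp
    then obtain g where "g \<in> ?C" "\<phi> x = inner (act g x) t0" by auto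
    then show ?thesis using Cauchy_Schwarz_ineq2[of "act g x" t0] iso by simp
  qed
  have int_phi: "integrable M (\<lambda>w. \<phi> (X w))"
  proof (rule Bochner_Integration.integrable_bound[OF integrable_mult_right[OF integrable_norm[OF intX], of "norm t0"] meas_phi])
    show "AE x in M. norm (\<phi> (X x)) \<le> norm (norm t0 * norm (X x))"
    proof (rule AE_I2)
      fix x
      show "norm (\<phi> (X x)) \<le> norm (norm t0 * norm (X x))"
        using phi_bound[of "X x"] by (simp add: ac_simps)
    qed
  qed
  define A where "A = (\<integral>w. (norm (X w))\<^sup>2 \<partial>M)"
  define b where "b = (norm t0)\<^sup>2"
  define c where "c = (\<integral>w. \<phi> (X w) \<partial>M)"
  have pw: "Min ((\<lambda>g. (norm (act g x - s *\<^sub>R t0))\<^sup>2) ` ?C) = (norm x)\<^sup>2 + s\<^sup>2 * b - 2 * s * \<phi> x"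
    if "s \<ge> 0" for x s
  proof -
    have "(\<lambda>g. (norm (act g x - s *\<^sub>R t0))\<^sup>2) ` ?C = (\<lambda>g. ((norm x)\<^sup>2 + s\<^sup>2 * b) - (2 * s) * inner (act g x) t0) ` ?C"
    proof (rule image_cong[OF refl])
      fix g assume "g \<in> ?C"
      then show "(norm (act g x - s *\<^sub>R t0))\<^sup>2 = ((norm x)\<^sup>2 + s\<^sup>2 * b) - (2 * s) * inner (act g x) t0"
        using iso[of g x] by (simp add: nds b_def power_mult_distrib)
    qed
    then show ?thesis using min_max[OF fin ne, of "2 * s"] that unfolding \<phi>_def by simp
  qed
  have F: "orbit_variance M G act X (s *\<^sub>R t0) = A + s\<^sup>2 * b - 2 * s * c" if "s \<ge> 0" for s
  proof -
    have "orbit_variance M G act X (s *\<^sub>R t0) = (\<integral>w. (norm (X w))\<^sup>2 + s\<^sup>2 * b - 2 * s * \<phi> (X w) \<partial>M)"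
      unfolding orbit_variance_def using pw[OF that] by simp
    also have "\<dots> = A + s\<^sup>2 * b - 2 * s * c"
      using assms(7) int_phi by (simp add: A_def c_def P.prob_space)
    finally show ?thesis .
  qed
  have t0ne: "t0 \<noteq> 0"
  proof
    assume "t0 = 0"
    then have "Cone G act t0 = UNIV"
      unfolding Cone_def using lin linear_0 by fastforce
    then show False using assms(10) by simp
  qed
  then have bpos: "b > 0" by (simp add: b_def)
  define h where "h w = \<phi> (X w) - inner (X w) t0" for w
  have h_nn: "h w \<ge> 0" for w
  proof -
    have "inner (act \<one>\<^bsub>G\<^esub> (X w)) t0 \<le> \<phi> (X w)" unfolding \<phi>_def using fin by simp
    then show ?thesis by (simp add: h_def one)
  qed
  have h_pos: "h w > 0" if nc: "X w \<notin> Cone G act t0" for w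
  proof -
    obtain g where g: "g \<in> ?C" "norm (X w - t0) > norm (X w - act g t0)"
      using nc unfolding Cone_def by (auto simp: not_le)
    then have "(norm (X w - t0))\<^sup>2 > (norm (X w - act g t0))\<^sup>2"
      by (simp add: power_strict_mono)
    then have "inner (X w) (act g t0) > inner (X w) t0"
      using iso[OF g(1)] by (simp add: nds)
    moreover have "inner (X w) (act g t0) = inner (act (inv\<^bsub>G\<^esub> g) (X w)) t0"
    proof -
      have "inv\<^bsub>G\<^esub> g \<in> ?C" using g by simp
      then have "inner (act (inv\<^bsub>G\<^esub> g) (X w)) t0 = inner (X w) (act (inv\<^bsub>G\<^esub> (inv\<^bsub>G\<^esub> g)) t0)"
        using adj by blast
      then show ?thesis using g by simp
    qed
    moreover have "inner (act (inv\<^bsub>G\<^esub> g) (X w)) t0 \<le> \<phi> (X w)"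
      unfolding \<phi>_def using fin g by simp
    ultimately show ?thesis by (simp add: h_def)
  qed
  have int_h: "integrable M h"
    unfolding h_def using int_phi intX by simp
  have int_inner: "(\<integral>w. inner (X w) t0 \<partial>M) = b"
    using intX by (simp add: assms(8) b_def power2_norm_eq_inner)
  have "(\<integral>w. h w \<partial>M) \<noteq> 0"
  proof
    assume "(\<integral>w. h w \<partial>M) = 0"
    then have "AE w in M. h w = 0" using integral_nonneg_eq_0_iff_AE[OF int_h] h_nn by simp
    then have "AE w in M. X w \<in> Cone G act t0" by (rule AE_mp) (use h_pos in force)
    then obtain N where N: "{w \<in> space M. \<not> X w \<in> Cone G act t0} \<subseteq> N" "N \<in> sets M" "emeasure M N = 0"
      by (auto elim: AE_E)
    let ?S = "{w \<in> space M. X w \<notin> Cone G act t0}"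
    have "?S \<in> sets M" using assms(10) measure_notin_sets by fastforce
    then have "measure M ?S \<le> measure M N" using N by (intro P.finite_measure_mono) auto
    also have "\<dots> = 0" using N(3) by (simp add: measure_def)
    finally show False using assms(10) by simp
  qed
  moreover have "(\<integral>w. h w \<partial>M) \<ge> 0" using h_nn by simp
  moreover have "(\<integral>w. h w \<partial>M) = c - b"
    unfolding h_def c_def using int_phi intX int_inner by simp
  ultimately have cb: "c > b" by simp
  have "orbit_variance M G act X (1 *\<^sub>R t0) \<le> orbit_variance M G act X ((c / b) *\<^sub>R t0)"
    using fm unfolding is_frechet_mean_def by simp
  then have "A + b - 2 * c \<le> A + (c/b)\<^sup>2 * b - 2 * (c/b) * c"
    using F[of 1] F[of "c/b"] bpos cb by simp
  moreover have "(c/b)\<^sup>2 * b - 2 * (c/b) * c = - c\<^sup>2 / b"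
    using bpos by (simp add: field_simps power2_eq_square)
  ultimately have "b - 2 * c + c\<^sup>2 / b \<le> 0" by simp
  moreover have "b - 2 * c + c\<^sup>2 / b = (c - b)\<^sup>2 / b"
    using bpos by (simp add: field_simps power2_eq_square)
  ultimately have "(c - b)\<^sup>2 / b \<le> 0" by simp
  moreover have "(c - b)\<^sup>2 / b > 0" using bpos cb by simp
  ultimately show False by simp
qed

end
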